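(* Let $E$ be a vector bundle of rank $r$ on a variety $X$ and $k\geq 0$. Then for all $d$, $$s_k(\mathrm{Sym}^d(E))=\sum_{|\lambda|=k}p_\lambda(d)\,c_\lambda(E),$$ where the sum runs over the partitions $\lambda=(\lambda_1,\dots,\lambda_l)$ of $k$, $c_\lambda(E):=c_{\lambda_1}(E)\cdots c_{\lambda_l}(E)$, and each $p_\lambda(d)$ is a polynomial in $d$ (with rational coefficients, independent of $E$ and $X$) of degree $\leq rk$; moreover there exists $\lambda$ with $p_\lambda$ of degree exactly $rk$.
   Context: $s_k$ denotes the $k$-th Segre class, with the convention that the total Segre class is the inverse of the total Chern class: $s(E)=c(E)^{-1}$. *)

theory Defs
  imports "HOL-Computational_Algebra.Computational_Algebra" "HOL-Library.Multiset"
begin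

text \<open>Splitting principle model: a rank r bundle E is represented by its Chern roots
  x 0, ..., x (r-1) (values outside {..<r} are ignored).\<close>

definition chern :: "nat \<Rightarrow> (nat \<Rightarrow> real) \<Rightarrow> nat \<Rightarrow> real" where
  "chern r x i = (\<Sum>S\<in>{S. S \<subseteq> {..<r} \<and> card S = i}. \<Prod>j\<in>S. x j)"

definition chern_part :: "nat \<Rightarrow> (nat \<Rightarrow> real) \<Rightarrow> nat multiset \<Rightarrow> real" where
  "chern_part r x lam = (\<Prod>i\<in>#lam. chern r x i)"

definition partitions_of :: "nat \<Rightarrow> nat multiset set" where
  "partitions_of k = {lam. (\<forall>i\<in>#lam. 0 < i) \<and> sum_mset lam = k}"

text \<open>Exponent vectors a of the monomials of degree d in r variables; the Chern roots
  of Sym^d E are the sums a_0 x_0 + ... + a_(r-1) x_(r-1).\<close>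
definition sym_exps :: "nat \<Rightarrow> nat \<Rightarrow> (nat \<Rightarrow> nat) set" where
  "sym_exps r d = {a. (\<forall>j. r \<le> j \<longrightarrow> a j = 0) \<and> (\<Sum>j<r. a j) = d}"

definition sym_root :: "nat \<Rightarrow> (nat \<Rightarrow> real) \<Rightarrow> (nat \<Rightarrow> nat) \<Rightarrow> real" where
  "sym_root r x a = (\<Sum>j<r. real (a j) * x j)"

text \<open>k-th Segre class of Sym^d E: degree-k part of c(Sym^d E)^{-1}, where the
  grading is tracked by the formal variable X.\<close>
definition segre_sym :: "nat \<Rightarrow> (nat \<Rightarrow> real) \<Rightarrow> nat \<Rightarrow> nat \<Rightarrow> real" where
  "segre_sym r x d k =
     fps_nth (inverse (\<Prod>a\<in>sym_exps r d. 1 + fps_const (sym_root r x a) * fps_X)) k"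

end

theory Submission
  imports Defs
begin


lemma finite_sym_exps: "finite (sym_exps r d)"
proof -
  have "sym_exps r d \<subseteq> (\<lambda>f j. if j < r then f j else 0) ` (PiE {..<r} (\<lambda>_. {..d}))"
  proof
    fix a assume a: "a \<in> sym_exps r d"
    hence z: "\<forall>j. r \<le> j \<longrightarrow> a j = 0" and s: "(\<Sum>j<r. a j) = d" by (auto simp: sym_exps_def)
    have le: "a j \<le> d" if "j < r" for j
      using member_le_sum[of j "{..<r}" a] that s by auto
    let ?f = "restrict a {..<r}"
    have "?f \<in> PiE {..<r} (\<lambda>_. {..d})" using le by auto
    moreover have "a = (\<lambda>j. if j < r then ?f j else 0)" using z by (auto simp: fun_eq_iff)
    ultimately show "a \<in> (\<lambda>f j. if j < r then f j else 0) ` (PiE {..<r} (\<lambda>_. {..d}))" by blast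
  qed
  thus ?thesis by (rule finite_subset) (auto intro: finite_PiE)
qed

lemma size_le_sum_mset_pos: "(\<forall>i\<in>#M. 0 < (i::nat)) \<Longrightarrow> size M \<le> sum_mset M"
  by (induction M) auto

lemma finite_partitions: "finite (partitions_of k)"
proof -
  have "partitions_of k \<subseteq> mset ` {xs. set xs \<subseteq> {..k} \<and> length xs \<le> k}"
  proof
    fix M assume M: "M \<in> partitions_of k"
    hence p: "\<forall>i\<in>#M. 0 < i" and s: "sum_mset M = k" by (auto simp: partitions_of_def)
    let ?xs = "sorted_list_of_multiset M"
    have "set ?xs \<subseteq> {..k}"
    proof
      fix i assume "i \<in> set ?xs"
      hence "i \<in># M" by simp
      hence "i \<le> sum_mset M" using sum_mset.remove by fastforce
      thus "i \<in> {..k}" using s by simp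
    qed
    moreover have "length ?xs \<le> k" using size_le_sum_mset_pos[OF p] s by (metis mset_sorted_list_of_multiset size_mset)
    ultimately show "M \<in> mset ` {xs. set xs \<subseteq> {..k} \<and> length xs \<le> k}"
      by (intro image_eqI[of _ _ ?xs]) auto
  qed
  thus ?thesis by (rule finite_subset) (intro finite_imageI finite_lists_length_le; simp)
qed

definition Ch :: "nat \<Rightarrow> nat \<Rightarrow> ((nat \<Rightarrow> real) \<Rightarrow> real) \<Rightarrow> bool" where
  "Ch r k g \<longleftrightarrow> (\<exists>\<alpha>::nat multiset \<Rightarrow> rat. \<forall>x. g x =
      (\<Sum>lam\<in>partitions_of k. of_rat (\<alpha> lam) * chern_part r x lam))"

lemma Ch_cong: "Ch r k f \<Longrightarrow> (\<And>x. f x = g x) \<Longrightarrow> Ch r k g"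
  unfolding Ch_def by metis

lemma Ch_zero: "Ch r k (\<lambda>_. 0)"
  unfolding Ch_def by (rule exI[of _ "\<lambda>_. 0"]) simp

lemma Ch_add: "Ch r k f \<Longrightarrow> Ch r k g \<Longrightarrow> Ch r k (\<lambda>x. f x + g x)"
proof -
  assume "Ch r k f" "Ch r k g"
  then obtain a b where a: "\<forall>x. f x = (\<Sum>lam\<in>partitions_of k. of_rat (a lam) * chern_part r x lam)"
    and b: "\<forall>x. g x = (\<Sum>lam\<in>partitions_of k. of_rat (b lam) * chern_part r x lam)"
    unfolding Ch_def by blast
  show ?thesis unfolding Ch_def
    by (rule exI[of _ "\<lambda>l. a l + b l"]) (simp add: a b of_rat_add distrib_right sum.distrib)
qed

lemma Ch_smult: "Ch r k f \<Longrightarrow> Ch r k (\<lambda>x. of_rat c * f x)"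
proof -
  assume "Ch r k f"
  then obtain a where a: "\<forall>x. f x = (\<Sum>lam\<in>partitions_of k. of_rat (a lam) * chern_part r x lam)"
    unfolding Ch_def by blast
  show ?thesis unfolding Ch_def
    by (rule exI[of _ "\<lambda>l. c * a l"]) (simp add: a of_rat_mult sum_distrib_left mult.assoc)
qed

lemma Ch_sum: "finite I \<Longrightarrow> (\<And>i. i \<in> I \<Longrightarrow> Ch r k (f i)) \<Longrightarrow> Ch r k (\<lambda>x. \<Sum>i\<in>I. f i x)"
proof (induction I rule: finite_induct)
  case empty
  then show ?case by (simp add: Ch_zero)
next
  case (insert i I)
  then show ?case by (simp add: Ch_add)
qed

lemma partitions_of_0: "partitions_of 0 = {{#}}"
  unfolding partitions_of_def by (auto, metis gr_implies_not0 multiset_nonemptyE)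

lemma Ch_const: "Ch r 0 (\<lambda>_. of_rat c)"
  unfolding Ch_def by (rule exI[of _ "\<lambda>_. c"]) (simp add: partitions_of_0 chern_part_def)

lemma Ch_chern: "0 < j \<Longrightarrow> Ch r j (\<lambda>x. chern r x j)"
  unfolding Ch_def
proof (rule exI[of _ "\<lambda>l. if l = {#j#} then 1 else 0"], intro allI)
  fix x assume "0 < j"
  hence "{#j#} \<in> partitions_of j" by (simp add: partitions_of_def)
  thus "chern r x j = (\<Sum>lam\<in>partitions_of j. of_rat (if lam = {#j#} then 1 else 0) * chern_part r x lam)"
  proof -
    have "(\<Sum>lam\<in>partitions_of j. of_rat (if lam = {#j#} then 1 else 0) * chern_part r x lam)
       = (\<Sum>lam\<in>partitions_of j. if lam = {#j#} then chern_part r x lam else 0)"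
      by (intro sum.cong) auto
    also have "\<dots> = chern r x j" using \<open>{#j#} \<in> partitions_of j\<close>
      by (simp add: finite_partitions chern_part_def)
    finally show ?thesis by simp
  qed
qed

lemma chern_part_plus: "chern_part r x (l + m) = chern_part r x l * chern_part r x m"
  by (simp add: chern_part_def)

lemma Ch_mult: "Ch r k1 f \<Longrightarrow> Ch r k2 g \<Longrightarrow> Ch r (k1 + k2) (\<lambda>x. f x * g x)"
proof -
  assume "Ch r k1 f" "Ch r k2 g"
  then obtain a b where a: "\<forall>x. f x = (\<Sum>lam\<in>partitions_of k1. of_rat (a lam) * chern_part r x lam)"
    and b: "\<forall>x. g x = (\<Sum>lam\<in>partitions_of k2. of_rat (b lam) * chern_part r x lam)"
    unfolding Ch_def by blast
  let ?A = "partitions_of k1 \<times> partitions_of k2"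
  let ?C = "partitions_of (k1 + k2)"
  define c where "c nu = (\<Sum>p\<in>{p. p \<in> ?A \<and> fst p + snd p = nu}. a (fst p) * b (snd p))" for nu
  have finA: "finite ?A" by (simp add: finite_partitions)
  have img: "(\<lambda>p. fst p + snd p) ` ?A \<subseteq> ?C" by (auto simp: partitions_of_def)
  show ?thesis unfolding Ch_def
  proof (rule exI[of _ c], intro allI)
    fix x
    have "f x * g x = (\<Sum>p\<in>?A. of_rat (a (fst p) * b (snd p)) * chern_part r x (fst p + snd p))"
      by (simp add: a b sum_product sum.cartesian_product chern_part_plus of_rat_mult mult_ac case_prod_beta)
    also have "\<dots> = (\<Sum>nu\<in>?C. \<Sum>p\<in>{p. p \<in> ?A \<and> fst p + snd p = nu}. of_rat (a (fst p) * b (snd p)) * chern_part r x (fst p + snd p))"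
      by (rule sum.group[symmetric, OF finA finite_partitions img])
    also have "\<dots> = (\<Sum>nu\<in>?C. of_rat (c nu) * chern_part r x nu)"
      unfolding c_def of_rat_sum sum_distrib_right
      by (intro sum.cong refl) auto
    finally show "f x * g x = (\<Sum>nu\<in>?C. of_rat (c nu) * chern_part r x nu)" .
  qed
qed

definition Gf :: "real \<Rightarrow> real fps" where "Gf c = Abs_fps (\<lambda>n. (-1)^n * c^Suc n)"

lemma Gf_eq: "(1 + fps_const c * fps_X) * Gf c = fps_const c"
proof (rule fps_ext)
  fix n
  show "((1 + fps_const c * fps_X) * Gf c) $ n = fps_const c $ n"
  proof (cases n)
    case 0 thus ?thesis by (simp add: distrib_right mult.assoc Gf_def)
  next
    case (Suc m) thus ?thesis by (simp add: distrib_right mult.assoc Gf_def)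
  qed
qed

lemma prod_deriv:
  assumes "finite A"
  shows "fps_deriv (\<Prod>a\<in>A. 1 + fps_const (\<rho> a) * fps_X)
       = (\<Prod>a\<in>A. 1 + fps_const (\<rho> a) * fps_X) * (\<Sum>a\<in>A. Gf (\<rho> a))"
  using assms
proof (induction A rule: finite_induct)
  case empty
  then show ?case by simp
next
  case (insert a A)
  let ?P = "\<Prod>a\<in>A. 1 + fps_const (\<rho> a) * fps_X"
  have "fps_deriv (\<Prod>a\<in>insert a A. 1 + fps_const (\<rho> a) * fps_X)
     = fps_deriv ((1 + fps_const (\<rho> a) * fps_X) * ?P)" using insert by simp
  also have "\<dots> = fps_const (\<rho> a) * ?P + (1 + fps_const (\<rho> a) * fps_X) * fps_deriv ?P"
    by simp
  also have "\<dots> = (1 + fps_const (\<rho> a) * fps_X) * Gf (\<rho> a) * ?P + (1 + fps_const (\<rho> a) * fps_X) * (?P * (\<Sum>a\<in>A. Gf (\<rho> a)))"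
    by (simp only: Gf_eq insert.IH)
  also have "\<dots> = ((1 + fps_const (\<rho> a) * fps_X) * ?P) * (Gf (\<rho> a) + (\<Sum>a\<in>A. Gf (\<rho> a)))"
    by (simp add: algebra_simps)
  also have "\<dots> = (\<Prod>a\<in>insert a A. 1 + fps_const (\<rho> a) * fps_X) * (\<Sum>a\<in>insert a A. Gf (\<rho> a))"
    using insert by simp
  finally show ?case .
qed

lemma L_nth: "(\<Sum>a\<in>A. Gf (\<rho> a)) $ n = (-1)^n * (\<Sum>a\<in>A. \<rho> a ^ Suc n)"
  by (simp add: fps_sum_nth Gf_def sum_distrib_left)

lemma prod_0: "(\<Prod>a\<in>A. 1 + fps_const (\<rho> a) * fps_X) $ 0 = (1::real)"
  by (induction A rule: infinite_finite_induct) (auto simp: fps_mult_nth)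

lemma newton_inv:
  fixes \<rho> :: "'b \<Rightarrow> real"
  assumes "finite A"
  defines "S \<equiv> inverse (\<Prod>a\<in>A. 1 + fps_const (\<rho> a) * fps_X)"
  shows "of_nat (Suc k) * S $ Suc k = - (\<Sum>i=0..k. S $ i * ((-1)^(k - i) * (\<Sum>a\<in>A. \<rho> a ^ Suc (k - i))))"
proof -
  let ?F = "\<Prod>a\<in>A. 1 + fps_const (\<rho> a) * fps_X"
  let ?L = "\<Sum>a\<in>A. Gf (\<rho> a)"
  have F0: "?F $ 0 \<noteq> 0" by (simp add: prod_0)
  have "fps_deriv S = - fps_deriv ?F * S\<^sup>2" unfolding S_def by (rule fps_inverse_deriv[OF F0])
  also have "\<dots> = - ?L * (?F * S) * S" unfolding prod_deriv[OF assms(1)] by (simp add: power2_eq_square mult_ac)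
  also have "?F * S = 1" unfolding S_def by (rule inverse_mult_eq_1'[OF F0])
  finally have "fps_deriv S = - ?L * S" by simp
  hence "fps_deriv S $ k = - (S * ?L) $ k" by (simp add: mult.commute)
  thus ?thesis by (simp only: fps_deriv_nth fps_neg_nth fps_mult_nth L_nth) simp
qed

lemma newton_e:
  fixes \<rho> :: "'b \<Rightarrow> real"
  assumes "finite A"
  defines "F \<equiv> (\<Prod>a\<in>A. 1 + fps_const (\<rho> a) * fps_X)"
  shows "of_nat (Suc k) * F $ Suc k = (\<Sum>i=0..k. F $ i * ((-1)^(k - i) * (\<Sum>a\<in>A. \<rho> a ^ Suc (k - i))))"
proof -
  have "fps_deriv F $ k = (F * (\<Sum>a\<in>A. Gf (\<rho> a))) $ k" unfolding F_def by (simp only: prod_deriv[OF assms(1)])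
  thus ?thesis by (simp add: fps_mult_nth L_nth)
qed

lemma Ch_mult': "Ch r k1 f \<Longrightarrow> Ch r k2 g \<Longrightarrow> k = k1 + k2 \<Longrightarrow> Ch r k (\<lambda>x. f x * g x)"
  using Ch_mult by blast

lemma Ch_smult': "Ch r k f \<Longrightarrow> Ch r k (\<lambda>x. of_nat n * f x)"
  using Ch_smult[of r k f "of_nat n"] by simp

lemma Ch_smult_int: "Ch r k f \<Longrightarrow> Ch r k (\<lambda>x. of_int n * f x)"
  using Ch_smult[of r k f "of_int n"] by simp

lemma Ch_neg1: "Ch r k f \<Longrightarrow> Ch r k (\<lambda>x. (-1)^n * f x)"
  using Ch_smult[of r k f "(-1)^n"] by (simp add: of_rat_power of_rat_minus)

lemma fps_const_prod': "(\<Prod>i\<in>B. fps_const (f i)) = fps_const (\<Prod>i\<in>B. f i :: 'a::comm_ring_1)"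
  by (induction B rule: infinite_finite_induct) (simp_all add: fps_const_mult)

lemma chern_fps: "(\<Prod>i<r. 1 + fps_const (x i) * fps_X) $ j = chern r x j"
proof -
  have "(\<Prod>i<r. 1 + fps_const (x i) * fps_X) = (\<Prod>i<r. fps_const (x i) * fps_X + 1)"
    by (simp only: add.commute)
  also have "\<dots> = (\<Sum>B\<in>Pow {..<r}. (\<Prod>i\<in>B. fps_const (x i) * fps_X) * (\<Prod>i\<in>{..<r}-B. 1))"
    by (rule prod_add) simp
  also have "\<dots> = (\<Sum>B\<in>Pow {..<r}. fps_const (\<Prod>i\<in>B. x i) * fps_X ^ card B)"
    by (intro sum.cong refl) (simp only: prod.distrib fps_const_prod' prod_constant power_one mult_1_right)
  finally have "(\<Prod>i<r. 1 + fps_const (x i) * fps_X) $ j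
      = (\<Sum>B\<in>Pow {..<r}. if j = card B then (\<Prod>i\<in>B. x i) else 0)"
    by (auto simp: fps_sum_nth fps_X_power_nth intro!: sum.cong)
  also have "\<dots> = (\<Sum>B\<in>{B. B \<in> Pow {..<r} \<and> card B = j}. \<Prod>i\<in>B. x i)"
    by (subst sum.inter_filter[symmetric]) (auto intro!: sum.cong)
  also have "\<dots> = chern r x j" unfolding chern_def by (intro sum.cong) auto
  finally show ?thesis .
qed

lemma chern_0: "chern r x 0 = 1"
proof -
  have "{S. S \<subseteq> {..<r} \<and> card S = 0} = {{}}" by (auto dest: finite_subset)
  thus ?thesis by (simp add: chern_def)
qed

lemma chern_big: "r < i \<Longrightarrow> chern r x i = 0"
proof -
  assume "r < i"
  have e: "{S. S \<subseteq> {..<r} \<and> card S = i} = {}"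
    using \<open>r < i\<close> by (auto dest!: card_mono[OF finite_lessThan])
  show ?thesis unfolding chern_def e by simp
qed

definition pw :: "nat \<Rightarrow> (nat \<Rightarrow> real) \<Rightarrow> nat \<Rightarrow> real" where
  "pw r x j = (\<Sum>i<r. x i ^ j)"

lemma Ch_pw: "Ch r j (\<lambda>x. pw r x j)"
proof (induction j rule: less_induct)
  case (less j)
  show ?case
  proof (cases j)
    case 0
    then show ?thesis using Ch_const[of r "of_nat r"] by (simp add: pw_def)
  next
    case (Suc k)
    have eq: "pw r x (Suc k) = (-1)^k * (of_nat (Suc k) * chern r x (Suc k)
          - (\<Sum>i=1..k. chern r x i * ((-1)^(k - i) * pw r x (Suc (k - i)))))" for x
    proof -
      have "of_nat (Suc k) * chern r x (Suc k) = (\<Sum>i=0..k. chern r x i * ((-1)^(k - i) * pw r x (Suc (k - i))))"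
        using newton_e[of "{..<r}" k x] by (simp add: chern_fps pw_def)
      also have "\<dots> = (-1)^k * pw r x (Suc k) + (\<Sum>i=1..k. chern r x i * ((-1)^(k - i) * pw r x (Suc (k - i))))"
        by (simp add: sum.atLeast_Suc_atMost chern_0)
      finally have "(-1)^k * pw r x (Suc k) = of_nat (Suc k) * chern r x (Suc k)
          - (\<Sum>i=1..k. chern r x i * ((-1)^(k - i) * pw r x (Suc (k - i))))" by simp
      hence "(-1)^k * ((-1)^k * pw r x (Suc k)) = (-1)^k * (of_nat (Suc k) * chern r x (Suc k)
          - (\<Sum>i=1..k. chern r x i * ((-1)^(k - i) * pw r x (Suc (k - i)))))" by simp
      thus ?thesis by (simp add: power_mult_distrib[symmetric])
    qed
    have "Ch r (Suc k) (\<lambda>x. (-1)^k * (of_nat (Suc k) * chern r x (Suc k)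
          + (-1)^1 * (\<Sum>i=1..k. chern r x i * ((-1)^(k - i) * pw r x (Suc (k - i))))))"
    proof (intro Ch_neg1 Ch_add)
      show "Ch r (Suc k) (\<lambda>x. of_nat (Suc k) * chern r x (Suc k))"
        by (intro Ch_smult' Ch_chern) simp
      show "Ch r (Suc k) (\<lambda>x. (\<Sum>i = 1..k. chern r x i * ((- 1) ^ (k - i) * pw r x (Suc (k - i)))))"
      proof (rule Ch_sum)
        fix i assume i: "i \<in> {1..k}"
        show "Ch r (Suc k) (\<lambda>x. chern r x i * ((- 1) ^ (k - i) * pw r x (Suc (k - i))))"
          by (rule Ch_mult'[OF Ch_chern Ch_neg1[OF less.IH]]) (use i Suc in auto)
      qed simp
    qed
    thus ?thesis using Suc eq by simp
  qed
qed

lemma sum_upd_nat: "finite A \<Longrightarrow> i \<in> A \<Longrightarrow> sum (f(i := v)) A + f i = sum f A + (v::nat)"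
proof -
  assume A: "finite A" "i \<in> A"
  have "sum (f(i := v)) A = v + sum (f(i := v)) (A - {i})" using A by (simp add: sum.remove)
  also have "sum (f(i := v)) (A - {i}) = sum f (A - {i})" by (intro sum.cong) auto
  finally show ?thesis using A by (simp add: sum.remove)
qed

lemma sym_root_upd: "i < r \<Longrightarrow> sym_root r x (b(i := v)) = sym_root r x b - real (b i) * x i + real v * x i"
proof -
  assume i: "i < r"
  have "sym_root r x (b(i := v)) = real v * x i + (\<Sum>j\<in>{..<r}-{i}. real (b j) * x j)"
    unfolding sym_root_def using i by (simp add: sum.remove)
  also have "\<dots> = real v * x i + (sym_root r x b - real (b i) * x i)"
    unfolding sym_root_def using i by (simp add: sum.remove)
  finally show ?thesis by simp
qed

lemma sym_exps_le: "a \<in> sym_exps r d \<Longrightarrow> a i \<le> d"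
proof -
  assume a: "a \<in> sym_exps r d"
  show ?thesis
  proof (cases "i < r")
    case True
    thus ?thesis using a member_le_sum[of i "{..<r}" a] by (auto simp: sym_exps_def)
  next
    case False thus ?thesis using a by (auto simp: sym_exps_def)
  qed
qed

definition PP :: "nat \<Rightarrow> (nat \<Rightarrow> real) \<Rightarrow> nat \<Rightarrow> nat \<Rightarrow> real" where
  "PP r x m d = (\<Sum>a\<in>sym_exps r d. sym_root r x a ^ m)"

lemma shift_sum:
  assumes i: "i < r" and n: "n \<le> d"
  shows "(\<Sum>a\<in>{a\<in>sym_exps r d. n \<le> a i}. g (sym_root r x a))
       = (\<Sum>b\<in>sym_exps r (d - n). g (sym_root r x b + real n * x i))"
proof (rule sum.reindex_bij_witness[where i = "\<lambda>b. b(i := b i + n)" and j = "\<lambda>a. a(i := a i - n)"])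
  fix a assume a: "a \<in> {a\<in>sym_exps r d. n \<le> a i}"
  show "(a(i := a i - n))(i := (a(i := a i - n)) i + n) = a" using a by auto
  have z: "\<forall>j. r \<le> j \<longrightarrow> a j = 0" and s: "(\<Sum>j<r. a j) = d" using a by (auto simp: sym_exps_def)
  have "(\<Sum>j<r. (a(i := a i - n)) j) + a i = d + (a i - n)" using sum_upd_nat[of "{..<r}" i a "a i - n"] i s by simp
  hence "(\<Sum>j<r. (a(i := a i - n)) j) = d - n" using a by auto
  thus "a(i := a i - n) \<in> sym_exps r (d - n)" using z i by (auto simp: sym_exps_def)
  show "g (sym_root r x (a(i := a i - n)) + real n * x i) = g (sym_root r x a)"
    using i a by (simp add: sym_root_upd algebra_simps of_nat_diff)
next
  fix b assume b: "b \<in> sym_exps r (d - n)"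
  have z: "\<forall>j. r \<le> j \<longrightarrow> b j = 0" and s: "(\<Sum>j<r. b j) = d - n" using b by (auto simp: sym_exps_def)
  show "(b(i := b i + n))(i := (b(i := b i + n)) i - n) = b" by auto
  have "(\<Sum>j<r. (b(i := b i + n)) j) + b i = (d - n) + (b i + n)" using sum_upd_nat[of "{..<r}" i b "b i + n"] i s by simp
  hence "(\<Sum>j<r. (b(i := b i + n)) j) = d" using n by auto
  thus "b(i := b i + n) \<in> {a\<in>sym_exps r d. n \<le> a i}" using z i by (auto simp: sym_exps_def)
qed

lemma sym_rec:
  "real d * PP r x m d = (\<Sum>n\<in>{1..d}. \<Sum>i<r. \<Sum>b\<in>sym_exps r (d - n). (sym_root r x b + real n * x i) ^ m)"
proof -
  let ?S = "sym_exps r d"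
  have fin: "finite ?S" by (rule finite_sym_exps)
  have "real d * PP r x m d = (\<Sum>a\<in>?S. \<Sum>i<r. real (a i) * sym_root r x a ^ m)"
    unfolding PP_def sum_distrib_left
  proof (intro sum.cong refl)
    fix a assume "a \<in> ?S"
    hence "d = (\<Sum>i<r. a i)" by (simp add: sym_exps_def)
    hence "real d = (\<Sum>i<r. real (a i))" by simp
    thus "real d * sym_root r x a ^ m = (\<Sum>i<r. real (a i) * sym_root r x a ^ m)"
      by (simp add: sum_distrib_right)
  qed
  also have "\<dots> = (\<Sum>a\<in>?S. \<Sum>i<r. \<Sum>n\<in>{n. n \<in> {1..d} \<and> n \<le> a i}. sym_root r x a ^ m)"
  proof (intro sum.cong refl)
    fix a i assume "a \<in> ?S"
    hence "{n. n \<in> {1..d} \<and> n \<le> a i} = {1..a i}" using sym_exps_le[of a r d i] by auto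
    thus "real (a i) * sym_root r x a ^ m = (\<Sum>n\<in>{n. n \<in> {1..d} \<and> n \<le> a i}. sym_root r x a ^ m)"
      by simp
  qed
  also have "\<dots> = (\<Sum>i<r. \<Sum>a\<in>?S. \<Sum>n\<in>{n. n \<in> {1..d} \<and> n \<le> a i}. sym_root r x a ^ m)"
    by (rule sum.swap)
  also have "\<dots> = (\<Sum>i<r. \<Sum>n\<in>{1..d}. \<Sum>a\<in>{a. a \<in> ?S \<and> n \<le> a i}. sym_root r x a ^ m)"
    by (intro sum.cong refl sum.swap_restrict fin) simp
  also have "\<dots> = (\<Sum>i<r. \<Sum>n\<in>{1..d}. \<Sum>b\<in>sym_exps r (d - n). (sym_root r x b + real n * x i) ^ m)"
    by (intro sum.cong refl shift_sum[where g = "\<lambda>y. y ^ m"]) auto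
  also have "\<dots> = (\<Sum>n\<in>{1..d}. \<Sum>i<r. \<Sum>b\<in>sym_exps r (d - n). (sym_root r x b + real n * x i) ^ m)"
    by (rule sum.swap)
  finally show ?thesis .
qed

lemma sym_exps_0: "sym_exps r 0 = {\<lambda>_. 0}"
proof -
  have "a \<in> sym_exps r 0 \<longleftrightarrow> a = (\<lambda>_. 0)" for a
  proof
    assume "a \<in> sym_exps r 0"
    hence z: "\<forall>j. r \<le> j \<longrightarrow> a j = 0" and s: "(\<Sum>j<r. a j) = 0" by (auto simp: sym_exps_def)
    have "a j = 0" for j using z s by (cases "j < r") auto
    thus "a = (\<lambda>_. 0)" by auto
  qed (auto simp: sym_exps_def)
  thus ?thesis by auto
qed

lemma inner_expand:
  "(\<Sum>i<r. \<Sum>b\<in>B. (sym_root r x b + real n * x i) ^ m)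
   = (\<Sum>j\<le>m. real (m choose j) * real n ^ j * (pw r x j * (\<Sum>b\<in>B. sym_root r x b ^ (m - j))))"
proof -
  have "(\<Sum>i<r. \<Sum>b\<in>B. (sym_root r x b + real n * x i) ^ m)
      = (\<Sum>i<r. \<Sum>b\<in>B. \<Sum>j\<le>m. real (m choose j) * real n ^ j * (x i ^ j * sym_root r x b ^ (m - j)))"
  proof (intro sum.cong refl)
    fix i b
    have "(sym_root r x b + real n * x i) ^ m = (real n * x i + sym_root r x b) ^ m" by (simp add: add.commute)
    also have "\<dots> = (\<Sum>j\<le>m. real (m choose j) * (real n * x i) ^ j * sym_root r x b ^ (m - j))"
      by (rule binomial_ring)
    finally show "(sym_root r x b + real n * x i) ^ m = (\<Sum>j\<le>m. real (m choose j) * real n ^ j * (x i ^ j * sym_root r x b ^ (m - j)))"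
      by (simp add: power_mult_distrib mult_ac)
  qed
  also have "\<dots> = (\<Sum>i<r. \<Sum>j\<le>m. \<Sum>b\<in>B. real (m choose j) * real n ^ j * (x i ^ j * sym_root r x b ^ (m - j)))"
    by (intro sum.cong refl) (rule sum.swap)
  also have "\<dots> = (\<Sum>j\<le>m. \<Sum>i<r. \<Sum>b\<in>B. real (m choose j) * real n ^ j * (x i ^ j * sym_root r x b ^ (m - j)))"
    by (rule sum.swap)
  also have "\<dots> = (\<Sum>j\<le>m. real (m choose j) * real n ^ j * (pw r x j * (\<Sum>b\<in>B. sym_root r x b ^ (m - j))))"
    by (intro sum.cong refl) (simp add: pw_def sum_distrib_left sum_distrib_right mult_ac, rule sum.swap)
  finally show ?thesis .
qed

lemma Ch_PP: "Ch r m (\<lambda>x. PP r x m d)"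
proof (induction d arbitrary: m rule: less_induct)
  case (less d)
  show ?case
  proof (cases d)
    case 0
    have "PP r x m d = of_rat (if m = 0 then 1 else 0)" for x
      using 0 by (simp add: PP_def sym_exps_0 sym_root_def)
    moreover have "Ch r m (\<lambda>x. of_rat (if m = 0 then 1 else 0))"
      using Ch_const[of r 1] by (cases m) (auto simp: Ch_zero)
    ultimately show ?thesis using Ch_cong by metis
  next
    case (Suc d')
    have eq: "PP r x m d = of_rat (1 / of_nat d) * (\<Sum>n\<in>{1..d}. \<Sum>j\<le>m. of_nat ((m choose j) * n ^ j) *
         (pw r x j * PP r x (m - j) (d - n)))" (is "_ = _ * ?R") for x
    proof -
      have h: "real d * PP r x m d = ?R"
        unfolding sym_rec inner_expand by (simp add: PP_def)
      have dpos: "real d \<noteq> 0" using Suc by simp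
      have "PP r x m d = (real d * PP r x m d) / real d" using dpos by (rule nonzero_mult_div_cancel_left[symmetric])
      also have "\<dots> = ?R / real d" by (simp only: h)
      also have "\<dots> = of_rat (1 / of_nat d) * ?R" by (simp only: of_rat_divide of_rat_1 of_rat_of_nat_eq of_rat_inverse divide_inverse mult_1_left mult.commute)
      finally show ?thesis .
    qed
    have "Ch r m (\<lambda>x. of_rat (1 / of_nat d) * (\<Sum>n\<in>{1..d}. \<Sum>j\<le>m. of_nat ((m choose j) * n ^ j) *
         (pw r x j * PP r x (m - j) (d - n))))"
    proof (intro Ch_smult Ch_sum Ch_smult')
      fix n j assume n: "n \<in> {1..d}" and j: "j \<in> {..m}"
      show "Ch r m (\<lambda>x. pw r x j * PP r x (m - j) (d - n))"
        by (rule Ch_mult'[OF Ch_pw less.IH]) (use n j in auto)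
    qed auto
    from Ch_cong[OF this eq[symmetric]] show ?thesis .
  qed
qed

lemma segre_0: "segre_sym r x d 0 = 1"
  unfolding segre_sym_def by (simp add: prod_0)

lemma segre_rec: "segre_sym r x d (Suc k) = of_rat (- 1 / of_nat (Suc k)) *
   (\<Sum>i=0..k. (-1)^(k - i) * (segre_sym r x d i * PP r x (Suc (k - i)) d))"
  (is "_ = _ * ?R")
proof -
  have "of_nat (Suc k) * segre_sym r x d (Suc k) = - ?R"
    unfolding segre_sym_def PP_def
    by (subst newton_inv[OF finite_sym_exps]) (simp add: mult_ac)
  hence "segre_sym r x d (Suc k) = - ?R / of_nat (Suc k)"
    by (simp add: field_simps del: of_nat_Suc)
  also have "\<dots> = of_rat (- 1 / of_nat (Suc k)) * ?R"
    by (simp only: of_rat_divide of_rat_1 of_rat_of_nat_eq of_rat_minus) (simp add: field_simps del: of_nat_Suc)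
  finally show ?thesis .
qed

lemma Ch_segre: "Ch r k (\<lambda>x. segre_sym r x d k)"
proof (induction k rule: less_induct)
  case (less k)
  show ?case
  proof (cases k)
    case 0
    then show ?thesis using Ch_const[of r 1] by (simp add: segre_0)
  next
    case (Suc k')
    have "Ch r k (\<lambda>x. of_rat (- 1 / of_nat (Suc k')) *
       (\<Sum>i=0..k'. (-1)^(k' - i) * (segre_sym r x d i * PP r x (Suc (k' - i)) d)))"
    proof (intro Ch_smult Ch_sum Ch_neg1)
      fix i assume i: "i \<in> {0..k'}"
      show "Ch r k (\<lambda>x. segre_sym r x d i * PP r x (Suc (k' - i)) d)"
        by (rule Ch_mult'[OF less.IH Ch_PP]) (use i Suc in auto)
    qed simp
    thus ?thesis using Suc by (simp only: segre_rec)
  qed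
qed




definition ispoly :: "nat \<Rightarrow> (nat \<Rightarrow> real) \<Rightarrow> bool" where
  "ispoly D f \<longleftrightarrow> (\<exists>q::real poly. degree q \<le> D \<and> (\<forall>n. f n = poly q (real n)))"

lemma ispoly_cong: "ispoly D f \<Longrightarrow> (\<And>n. f n = g n) \<Longrightarrow> ispoly D g"
  unfolding ispoly_def by metis

lemma ispoly_mono: "ispoly D f \<Longrightarrow> D \<le> D' \<Longrightarrow> ispoly D' f"
  unfolding ispoly_def using le_trans by blast

lemma ispoly_const: "ispoly D (\<lambda>_. c)"
  unfolding ispoly_def by (rule exI[of _ "[:c:]"]) simp

lemma ispoly_add: "ispoly D f \<Longrightarrow> ispoly D g \<Longrightarrow> ispoly D (\<lambda>n. f n + g n)"
  unfolding ispoly_def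
proof (elim exE conjE)
  fix p q :: "real poly" assume "degree p \<le> D" "\<forall>n. f n = poly p (real n)" "degree q \<le> D" "\<forall>n. g n = poly q (real n)"
  thus "\<exists>s. degree s \<le> D \<and> (\<forall>n. f n + g n = poly s (real n))"
    by (intro exI[of _ "p + q"]) (auto intro: le_trans[OF degree_add_le_max])
qed

lemma ispoly_mult: "ispoly D1 f \<Longrightarrow> ispoly D2 g \<Longrightarrow> D1 + D2 \<le> D \<Longrightarrow> ispoly D (\<lambda>n. f n * g n)"
  unfolding ispoly_def
proof (elim exE conjE)
  fix p q :: "real poly" assume "degree p \<le> D1" "\<forall>n. f n = poly p (real n)" "degree q \<le> D2" "\<forall>n. g n = poly q (real n)"
    "D1 + D2 \<le> D"
  thus "\<exists>s. degree s \<le> D \<and> (\<forall>n. f n * g n = poly s (real n))"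
    by (intro exI[of _ "p * q"]) (auto intro: le_trans[OF degree_mult_le])
qed

lemma ispoly_scale: "ispoly D f \<Longrightarrow> ispoly D (\<lambda>n. c * f n)"
  using ispoly_mult[OF ispoly_const[of 0 c], of D f D] by simp

lemma ispoly_sum: "finite I \<Longrightarrow> (\<And>i. i \<in> I \<Longrightarrow> ispoly D (f i)) \<Longrightarrow> ispoly D (\<lambda>n. \<Sum>i\<in>I. f i n)"
proof (induction I rule: finite_induct)
  case empty
  then show ?case by (simp add: ispoly_const)
next
  case (insert i I)
  then show ?case by (simp add: ispoly_add)
qed

lemma ispoly_pow: "ispoly l (\<lambda>n. real n ^ l)"
  unfolding ispoly_def by (rule exI[of _ "monom 1 l"]) (simp add: poly_monom degree_monom_le)

lemma succ_pow: "(real n + 1) ^ Suc l = real n ^ Suc l + real (Suc l) * real n ^ l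
   + (\<Sum>t<l. real (Suc l choose t) * real n ^ t)"
proof -
  have "(real n + 1) ^ Suc l = (\<Sum>t\<le>Suc l. real (Suc l choose t) * real n ^ t)"
    using binomial_ring[of "real n" 1 "Suc l"] by simp
  also have "{..Suc l} = insert (Suc l) (insert l {..<l})" by auto
  finally show ?thesis by simp
qed

lemma powsum_id: "real (Suc l) * (\<Sum>j<n. real j ^ l) = real n ^ Suc l - (\<Sum>t<l. real (Suc l choose t) * (\<Sum>j<n. real j ^ t))"
proof (induction n)
  case 0
  then show ?case by simp
next
  case (Suc n)
  have "real (Suc l) * (\<Sum>j<Suc n. real j ^ l) = real (Suc l) * (\<Sum>j<n. real j ^ l) + real (Suc l) * real n ^ l"
    by (simp add: algebra_simps)
  also have "\<dots> = real n ^ Suc l - (\<Sum>t<l. real (Suc l choose t) * (\<Sum>j<n. real j ^ t)) + real (Suc l) * real n ^ l"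
    by (simp only: Suc.IH)
  also have "\<dots> = (real n + 1) ^ Suc l - (\<Sum>t<l. real (Suc l choose t) * (\<Sum>j<Suc n. real j ^ t))"
  proof -
    have e1: "(\<Sum>t<l. real (Suc l choose t) * (\<Sum>j<Suc n. real j ^ t))
       = (\<Sum>t<l. real (Suc l choose t) * (\<Sum>j<n. real j ^ t)) + (\<Sum>t<l. real (Suc l choose t) * real n ^ t)"
      by (simp add: distrib_left sum.distrib)
    show ?thesis using succ_pow[of n l] e1 by linarith
  qed
  finally show ?case by (simp add: add.commute)
qed

lemma aux_div: "c \<noteq> 0 \<Longrightarrow> c * S = A - R \<Longrightarrow> (1/c) * (A + (-1) * R) = (S::real)"
  by (simp add: field_simps)

lemma ispoly_powsum: "ispoly (Suc l) (\<lambda>n. \<Sum>j<n. real j ^ l)"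
proof (induction l rule: less_induct)
  case (less l)
  have "ispoly (Suc l) (\<lambda>n. (1 / real (Suc l)) * (real n ^ Suc l + (-1) * (\<Sum>t<l. real (Suc l choose t) * (\<Sum>j<n. real j ^ t))))"
    apply (intro ispoly_scale ispoly_add ispoly_pow ispoly_sum)
    apply simp
    apply (rule ispoly_mono[OF less.IH])
    apply auto
    done
  moreover have "(1 / real (Suc l)) * (real n ^ Suc l + (-1) * (\<Sum>t<l. real (Suc l choose t) * (\<Sum>j<n. real j ^ t)))
     = (\<Sum>j<n. real j ^ l)" for n
    by (rule aux_div[OF _ powsum_id]) simp
  ultimately show ?case by (rule ispoly_cong)
qed

lemma poly_sum_D:
  fixes q :: "real poly"
  assumes "degree q \<le> D" shows "poly q x = (\<Sum>l\<le>D. coeff q l * x ^ l)"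
proof -
  have "poly q x = (\<Sum>i\<le>degree q. coeff q i * x^i)" by (rule poly_altdef)
  also have "\<dots> = (\<Sum>l\<le>D. coeff q l * x ^ l)"
    by (rule sum.mono_neutral_left) (use assms in \<open>auto simp: coeff_eq_0\<close>)
  finally show ?thesis .
qed

lemma ispoly_prefix: "ispoly D f \<Longrightarrow> ispoly (Suc D) (\<lambda>n. \<Sum>j<n. f j)"
proof -
  assume "ispoly D f"
  then obtain q where q: "degree q \<le> D" "\<And>n. f n = poly q (real n)" unfolding ispoly_def by blast
  have "ispoly (Suc D) (\<lambda>n. \<Sum>l\<le>D. coeff q l * (\<Sum>j<n. real j ^ l))"
    by (intro ispoly_sum ispoly_scale ispoly_mono[OF ispoly_powsum]) auto
  moreover have "(\<Sum>l\<le>D. coeff q l * (\<Sum>j<n. real j ^ l)) = (\<Sum>j<n. f j)" for n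
    unfolding q(2) poly_sum_D[OF q(1)] sum_distrib_left by (rule sum.swap)
  ultimately show ?thesis by (rule ispoly_cong)
qed

lemma ispoly_prefix': "ispoly D f \<Longrightarrow> ispoly (Suc D) (\<lambda>n. \<Sum>j\<le>n. f j)"
proof -
  assume f: "ispoly D f"
  have "ispoly (Suc D) (\<lambda>n. (\<Sum>j<n. f j) + f n)"
    by (intro ispoly_add ispoly_prefix f ispoly_mono[OF f]) simp
  thus ?thesis by (rule ispoly_cong) (simp add: lessThan_Suc_atMost[symmetric])
qed

lemma neg_real_pow: "(- real j) ^ k = (-1) ^ k * real j ^ k"
  by (rule power_minus)

lemma ispoly_conv:
  assumes f: "ispoly D1 f" and g: "ispoly D2 g"
  shows "ispoly (D1 + D2 + 1) (\<lambda>n. \<Sum>j\<le>n. f j * g (n - j))"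
proof -
  obtain q where q: "degree q \<le> D2" "\<And>n. g n = poly q (real n)" using g unfolding ispoly_def by blast
  define F where "F n j l t = f j * (coeff q l * (real (l choose t) * real n ^ t * (- real j) ^ (l - t)))" for n j l t
  have eq: "(\<Sum>j\<le>n. f j * g (n - j)) =
     (\<Sum>l\<le>D2. \<Sum>t\<le>l. (coeff q l * real (l choose t)) * (real n ^ t * (\<Sum>j\<le>n. f j * ((-1) ^ (l - t) * real j ^ (l - t)))))" for n
  proof -
    have "(\<Sum>j\<le>n. f j * g (n - j)) = (\<Sum>j\<le>n. \<Sum>l\<le>D2. \<Sum>t\<le>l. F n j l t)"
    proof (intro sum.cong refl)
      fix j assume "j \<in> {..n}"
      hence "real (n - j) = real n + (- real j)" by auto
      hence "g (n - j) = (\<Sum>l\<le>D2. coeff q l * (real n + (- real j)) ^ l)"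
        by (simp only: q(2) poly_sum_D[OF q(1)])
      also have "\<dots> = (\<Sum>l\<le>D2. coeff q l * (\<Sum>t\<le>l. real (l choose t) * real n ^ t * (- real j) ^ (l - t)))"
        by (simp only: binomial_ring)
      finally have "g (n - j) = (\<Sum>l\<le>D2. coeff q l * (\<Sum>t\<le>l. real (l choose t) * real n ^ t * (- real j) ^ (l - t)))" .
      hence "f j * g (n - j) = f j * (\<Sum>l\<le>D2. coeff q l * (\<Sum>t\<le>l. real (l choose t) * real n ^ t * (- real j) ^ (l - t)))"
        by (rule arg_cong)
      thus "f j * g (n - j) = (\<Sum>l\<le>D2. \<Sum>t\<le>l. F n j l t)"
        unfolding F_def by (simp only: sum_distrib_left)
    qed
    also have "\<dots> = (\<Sum>l\<le>D2. \<Sum>j\<le>n. \<Sum>t\<le>l. F n j l t)" by (rule sum.swap)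
    also have "\<dots> = (\<Sum>l\<le>D2. \<Sum>t\<le>l. \<Sum>j\<le>n. F n j l t)" by (rule sum.cong[OF refl], rule sum.swap)
    also have "\<dots> = (\<Sum>l\<le>D2. \<Sum>t\<le>l. (coeff q l * real (l choose t)) * (real n ^ t * (\<Sum>j\<le>n. f j * ((-1) ^ (l - t) * real j ^ (l - t)))))"
    proof (intro sum.cong refl)
      fix l t
      have "(\<Sum>j\<le>n. F n j l t) = (\<Sum>j\<le>n. (coeff q l * real (l choose t)) * (real n ^ t * (f j * ((-1) ^ (l - t) * real j ^ (l - t)))))"
        by (rule sum.cong[OF refl]) (simp only: F_def neg_real_pow mult_ac)
      also have "\<dots> = (coeff q l * real (l choose t)) * (real n ^ t * (\<Sum>j\<le>n. f j * ((-1) ^ (l - t) * real j ^ (l - t))))"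
        by (simp only: sum_distrib_left)
      finally show "(\<Sum>j\<le>n. F n j l t) = (coeff q l * real (l choose t)) * (real n ^ t * (\<Sum>j\<le>n. f j * ((-1) ^ (l - t) * real j ^ (l - t))))" .
    qed
    finally show ?thesis .
  qed
  have "ispoly (D1 + D2 + 1) (\<lambda>n. \<Sum>l\<le>D2. \<Sum>t\<le>l. (coeff q l * real (l choose t)) * (real n ^ t * (\<Sum>j\<le>n. f j * ((-1) ^ (l - t) * real j ^ (l - t)))))"
  proof (intro ispoly_sum ispoly_scale)
    fix l t assume l: "l \<in> {..D2}" and t: "t \<in> {..l}"
    have "ispoly (Suc (D1 + (l - t))) (\<lambda>n. \<Sum>j\<le>n. f j * ((-1) ^ (l - t) * real j ^ (l - t)))"
      by (intro ispoly_prefix' ispoly_mult[OF f ispoly_scale[OF ispoly_pow]]) simp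
    thus "ispoly (D1 + D2 + 1) (\<lambda>n. real n ^ t * (\<Sum>j\<le>n. f j * ((-1) ^ (l - t) * real j ^ (l - t))))"
      by (rule ispoly_mult[OF ispoly_pow]) (use l t in auto)
  qed auto
  thus ?thesis by (rule ispoly_cong) (rule eq[symmetric])
qed


lemma split_last:
  "(\<Sum>a\<in>sym_exps (Suc r) d. h (sym_root (Suc r) x a))
   = (\<Sum>j\<le>d. \<Sum>b\<in>sym_exps r (d - j). h (sym_root r x b + real j * x r))"
proof -
  have img: "(\<lambda>a. a r) ` sym_exps (Suc r) d \<subseteq> {..d}" using sym_exps_le by auto
  have "(\<Sum>a\<in>sym_exps (Suc r) d. h (sym_root (Suc r) x a))
     = (\<Sum>j\<le>d. \<Sum>a\<in>{a. a \<in> sym_exps (Suc r) d \<and> a r = j}. h (sym_root (Suc r) x a))"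
    by (rule sum.group[symmetric, OF finite_sym_exps finite_atMost img])
  also have "\<dots> = (\<Sum>j\<le>d. \<Sum>b\<in>sym_exps r (d - j). h (sym_root r x b + real j * x r))"
  proof (rule sum.cong[OF refl])
    fix j assume j: "j \<in> {..d}"
    show "(\<Sum>a\<in>{a. a \<in> sym_exps (Suc r) d \<and> a r = j}. h (sym_root (Suc r) x a))
        = (\<Sum>b\<in>sym_exps r (d - j). h (sym_root r x b + real j * x r))"
    proof (rule sum.reindex_bij_witness[where i = "\<lambda>b. b(r := j)" and j = "\<lambda>a. a(r := 0)"])
      fix a assume a: "a \<in> {a. a \<in> sym_exps (Suc r) d \<and> a r = j}"
      have z: "\<forall>k. Suc r \<le> k \<longrightarrow> a k = 0" and s: "(\<Sum>k<Suc r. a k) = d" and ar: "a r = j"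
        using a by (auto simp: sym_exps_def)
      show "(a(r := 0))(r := j) = a" using ar by auto
      have "(\<Sum>k<r. (a(r := 0)) k) = (\<Sum>k<r. a k)" by (intro sum.cong) auto
      also have "\<dots> = d - j" using s ar by simp
      finally show "a(r := 0) \<in> sym_exps r (d - j)" using z by (auto simp: sym_exps_def)
      have "sym_root r x (a(r := 0)) = (\<Sum>k<r. real (a k) * x k)" unfolding sym_root_def by (intro sum.cong) auto
      thus "h (sym_root r x (a(r := 0)) + real j * x r) = h (sym_root (Suc r) x a)"
        using ar by (simp add: sym_root_def)
    next
      fix b assume b: "b \<in> sym_exps r (d - j)"
      have z: "\<forall>k. r \<le> k \<longrightarrow> b k = 0" and s: "(\<Sum>k<r. b k) = d - j"
        using b by (auto simp: sym_exps_def)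
      show "(b(r := j))(r := 0) = b" using z by (auto simp: fun_eq_iff)
      have "(\<Sum>k<r. (b(r := j)) k) = (\<Sum>k<r. b k)" by (intro sum.cong) auto
      hence "(\<Sum>k<Suc r. (b(r := j)) k) = d" using s j by simp
      thus "b(r := j) \<in> {a. a \<in> sym_exps (Suc r) d \<and> a r = j}" using z by (auto simp: sym_exps_def)
    qed
  qed
  finally show ?thesis .
qed

lemma sym_exps_zero: "sym_exps 0 e = (if e = 0 then {\<lambda>_. 0} else {})"
  by (auto simp: sym_exps_def)

lemma ispoly_PP: "1 \<le> r \<Longrightarrow> ispoly (m + r - 1) (\<lambda>d. PP r x m d)"
proof (induction r arbitrary: m)
  case 0
  then show ?case by simp
next
  case (Suc r)
  show ?case
  proof (cases "r = 0")
    case True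
    have "PP (Suc r) x m d = (real d * x 0) ^ m" for d
    proof -
      have "PP (Suc r) x m d = (\<Sum>j\<le>d. \<Sum>b\<in>sym_exps 0 (d - j). (sym_root 0 x b + real j * x 0) ^ m)"
        unfolding PP_def using True split_last[where r=0 and d=d and h="\<lambda>y. y ^ m" and x=x] by simp
      also have "\<dots> = (\<Sum>j\<le>d. if j = d then (real j * x 0) ^ m else 0)"
        by (intro sum.cong refl) (auto simp: sym_exps_zero sym_root_def)
      also have "\<dots> = (real d * x 0) ^ m" by simp
      finally show ?thesis .
    qed
    moreover have "ispoly m (\<lambda>d. (real d * x 0) ^ m)"
      by (rule ispoly_cong[of _ "\<lambda>d. x 0 ^ m * real d ^ m"]) (auto intro: ispoly_scale ispoly_pow simp: power_mult_distrib)
    ultimately show ?thesis using True by simp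
  next
    case False
    have eq: "PP (Suc r) x m d = (\<Sum>i\<le>m. (real (m choose i) * x r ^ i) * (\<Sum>j\<le>d. real j ^ i * PP r x (m - i) (d - j)))" for d
    proof -
      have "PP (Suc r) x m d = (\<Sum>j\<le>d. \<Sum>b\<in>sym_exps r (d - j). (sym_root r x b + real j * x r) ^ m)"
        unfolding PP_def by (rule split_last)
      also have "\<dots> = (\<Sum>j\<le>d. \<Sum>b\<in>sym_exps r (d - j). \<Sum>i\<le>m. (real (m choose i) * x r ^ i) * (real j ^ i * sym_root r x b ^ (m - i)))"
      proof (intro sum.cong refl)
        fix j b
        have "(sym_root r x b + real j * x r) ^ m = (real j * x r + sym_root r x b) ^ m" by (simp add: add.commute)
        also have "\<dots> = (\<Sum>i\<le>m. real (m choose i) * (real j * x r) ^ i * sym_root r x b ^ (m - i))"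
          by (rule binomial_ring)
        finally show "(sym_root r x b + real j * x r) ^ m = (\<Sum>i\<le>m. (real (m choose i) * x r ^ i) * (real j ^ i * sym_root r x b ^ (m - i)))"
          by (simp add: power_mult_distrib mult_ac)
      qed
      also have "\<dots> = (\<Sum>j\<le>d. \<Sum>i\<le>m. \<Sum>b\<in>sym_exps r (d - j). (real (m choose i) * x r ^ i) * (real j ^ i * sym_root r x b ^ (m - i)))"
        by (rule sum.cong[OF refl], rule sum.swap)
      also have "\<dots> = (\<Sum>i\<le>m. \<Sum>j\<le>d. \<Sum>b\<in>sym_exps r (d - j). (real (m choose i) * x r ^ i) * (real j ^ i * sym_root r x b ^ (m - i)))"
        by (rule sum.swap)
      also have "\<dots> = (\<Sum>i\<le>m. (real (m choose i) * x r ^ i) * (\<Sum>j\<le>d. real j ^ i * PP r x (m - i) (d - j)))"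
        unfolding PP_def by (simp only: sum_distrib_left)
      finally show ?thesis .
    qed
    have "ispoly (m + Suc r - 1) (\<lambda>d. \<Sum>i\<le>m. (real (m choose i) * x r ^ i) * (\<Sum>j\<le>d. real j ^ i * PP r x (m - i) (d - j)))"
    proof (intro ispoly_sum ispoly_scale)
      fix i assume i: "i \<in> {..m}"
      have "ispoly (i + (m - i + r - 1) + 1) (\<lambda>d. \<Sum>j\<le>d. real j ^ i * PP r x (m - i) (d - j))"
        by (rule ispoly_conv[OF ispoly_pow Suc.IH]) (use False in auto)
      thus "ispoly (m + Suc r - 1) (\<lambda>d. \<Sum>j\<le>d. real j ^ i * PP r x (m - i) (d - j))"
        by (rule ispoly_mono) (use i False in auto)
    qed simp
    thus ?thesis using eq by (simp only: )
  qed
qed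

lemma ispoly_segre: "1 \<le> r \<Longrightarrow> ispoly (r * k) (\<lambda>d. segre_sym r x d k)"
proof (induction k rule: less_induct)
  case (less k)
  show ?case
  proof (cases k)
    case 0
    then show ?thesis using ispoly_const[of 0 1] by (simp add: segre_0)
  next
    case (Suc k')
    have "ispoly (r * k) (\<lambda>d. of_rat (- 1 / of_nat (Suc k')) *
       (\<Sum>i=0..k'. (-1)^(k' - i) * (segre_sym r x d i * PP r x (Suc (k' - i)) d)))"
    proof (intro ispoly_scale ispoly_sum)
      fix i assume i: "i \<in> {0..k'}"
      have le: "r * i + (Suc (k' - i) + r - 1) \<le> r * k"
      proof -
        have "k' - i \<le> r * (k' - i)" using less.prems by simp
        moreover have "r * i + r * (k' - i) = r * k'" using i by (simp add: diff_mult_distrib2)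
        moreover have "r * k = r * k' + r" using Suc by simp
        ultimately show ?thesis using less.prems by linarith
      qed
      show "ispoly (r * k) (\<lambda>d. segre_sym r x d i * PP r x (Suc (k' - i)) d)"
        by (rule ispoly_mult[OF less.IH ispoly_PP le]) (use i Suc less.prems in auto)
    qed simp
    thus ?thesis using Suc by (simp only: segre_rec)
  qed
qed




lemma poly_of_rat: "poly (map_poly (of_rat :: rat \<Rightarrow> real) p) (of_rat y) = of_rat (poly p y)"
  by (induction p) (auto simp: map_poly_pCons of_rat_add of_rat_mult)

definition Lb :: "nat \<Rightarrow> nat \<Rightarrow> rat poly" where
  "Lb D e = smult (inverse (\<Prod>e'\<in>{..D}-{e}. (of_nat e - of_nat e'))) (\<Prod>e'\<in>{..D}-{e}. [:- of_nat e', 1:])"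

lemma deg_of_rat: "degree (map_poly (of_rat :: rat \<Rightarrow> real) p) = degree p"
  by (rule degree_map_poly) simp

lemma degree_Lb: "e \<le> D \<Longrightarrow> degree (Lb D e) \<le> D"
proof -
  assume e: "e \<le> D"
  have "degree (\<Prod>e'\<in>{..D}-{e}. [:- (of_nat e' :: rat), 1:]) \<le> sum (degree \<circ> (\<lambda>e'. [:- (of_nat e' :: rat), 1:])) ({..D}-{e})"
    by (rule degree_prod_sum_le) simp
  also have "\<dots> = card ({..D}-{e})" by simp
  also have "\<dots> \<le> D" using e by simp
  finally show ?thesis unfolding Lb_def using degree_smult_le le_trans by blast
qed

lemma poly_Lb: "e \<le> D \<Longrightarrow> e'' \<le> D \<Longrightarrow> poly (Lb D e) (of_nat e'') = (if e'' = e then 1 else 0)"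
proof -
  assume e: "e \<le> D" and e'': "e'' \<le> D"
  have "poly (Lb D e) (of_nat e'') = inverse (\<Prod>e'\<in>{..D}-{e}. (of_nat e - of_nat e')) * (\<Prod>e'\<in>{..D}-{e}. (of_nat e'' - of_nat e' :: rat))"
    by (simp add: Lb_def poly_prod)
  also have "\<dots> = (if e'' = e then 1 else 0)"
  proof (cases "e'' = e")
    case True
    have "(\<Prod>e'\<in>{..D}-{e}. (of_nat e - of_nat e' :: rat)) \<noteq> 0" by (simp add: prod_zero_iff)
    thus ?thesis using True by simp
  next
    case False
    hence "e'' \<in> {..D}-{e}" using e'' by simp
    hence "(\<Prod>e'\<in>{..D}-{e}. (of_nat e'' - of_nat e' :: rat)) = 0"
      by (intro prod_zero) auto
    thus ?thesis using False by simp
  qed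
  finally show ?thesis .
qed

lemma interp:
  fixes q :: "real poly"
  assumes "degree q \<le> D"
  shows "poly q (real d) = (\<Sum>e\<le>D. poly q (real e) * of_rat (poly (Lb D e) (of_nat d)))"
proof -
  define R where "R = (\<Sum>e\<le>D. smult (poly q (real e)) (map_poly of_rat (Lb D e)))"
  have polyR: "poly R (real d') = (\<Sum>e\<le>D. poly q (real e) * of_rat (poly (Lb D e) (of_nat d')))" for d'
  proof -
    have "real d' = of_rat (of_nat d')" by simp
    thus ?thesis unfolding R_def poly_sum poly_smult by (simp only: poly_of_rat)
  qed
  have degR: "degree R \<le> D" unfolding R_def
    by (intro degree_sum_le finite_atMost, rule le_trans[OF degree_smult_le]) (simp add: deg_of_rat degree_Lb)
  have "q = R"
  proof (rule poly_eqI_degree[where A = "real ` {..D}"])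
    fix y assume "y \<in> real ` {..D}"
    then obtain e'' where e'': "e'' \<le> D" "y = real e''" by auto
    have "poly R y = (\<Sum>e\<le>D. poly q (real e) * of_rat (if e'' = e then 1 else 0))"
      unfolding e''(2) polyR by (intro sum.cong refl) (simp add: poly_Lb e'')
    also have "\<dots> = poly q y" using e'' by (simp add: of_rat_1 if_distrib cong: if_cong)
    finally show "poly q y = poly R y" by simp
  next
    have "card (real ` {..D}) = Suc D" by (simp add: card_image)
    thus "degree q < card (real ` {..D})" "degree R < card (real ` {..D})" using assms degR by auto
  qed
  hence "poly q (real d) = poly R (real d)" by simp
  also have "\<dots> = (\<Sum>e\<le>D. poly q (real e) * of_rat (poly (Lb D e) (of_nat d)))" by (rule polyR)
  finally show ?thesis .
qed

lemma main_exists: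
  assumes r: "1 \<le> r"
  shows "\<exists>p :: nat multiset \<Rightarrow> rat poly.
           (\<forall>lam\<in>partitions_of k. degree (p lam) \<le> r * k)
         \<and> (\<forall>(x :: nat \<Rightarrow> real) (d :: nat).
              segre_sym r x d k =
              (\<Sum>lam\<in>partitions_of k. poly (map_poly of_rat (p lam)) (real d) * chern_part r x lam))"
proof -
  let ?D = "r * k"
  have "\<forall>e. \<exists>\<alpha>::nat multiset \<Rightarrow> rat. \<forall>x. segre_sym r x e k = (\<Sum>lam\<in>partitions_of k. of_rat (\<alpha> lam) * chern_part r x lam)"
    using Ch_segre unfolding Ch_def by blast
  then obtain A where A: "\<And>e x. segre_sym r x e k = (\<Sum>lam\<in>partitions_of k. of_rat (A e lam) * chern_part r x lam)"
    by metis
  define p where "p lam = (\<Sum>e\<le>?D. smult (A e lam) (Lb ?D e))" for lam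
  have degp: "degree (p lam) \<le> ?D" for lam
    unfolding p_def by (intro degree_sum_le) (auto intro: le_trans[OF degree_smult_le] degree_Lb)
  have polyp: "poly (map_poly of_rat (p lam)) (real d) = (\<Sum>e\<le>?D. of_rat (A e lam) * of_rat (poly (Lb ?D e) (of_nat d)))" for lam d
  proof -
    have "real d = of_rat (of_nat d)" by simp
    hence "poly (map_poly of_rat (p lam)) (real d) = of_rat (poly (p lam) (of_nat d))" by (simp only: poly_of_rat)
    thus ?thesis unfolding p_def poly_sum poly_smult of_rat_sum of_rat_mult .
  qed
  have "segre_sym r x d k = (\<Sum>lam\<in>partitions_of k. poly (map_poly of_rat (p lam)) (real d) * chern_part r x lam)" for x d
  proof -
    obtain q where q: "degree q \<le> ?D" "\<And>n. segre_sym r x n k = poly q (real n)"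
      using ispoly_segre[OF r, of k x] unfolding ispoly_def by blast
    have "segre_sym r x d k = (\<Sum>e\<le>?D. segre_sym r x e k * of_rat (poly (Lb ?D e) (of_nat d)))"
      unfolding q(2) by (rule interp[OF q(1)])
    also have "\<dots> = (\<Sum>e\<le>?D. \<Sum>lam\<in>partitions_of k. of_rat (A e lam) * of_rat (poly (Lb ?D e) (of_nat d)) * chern_part r x lam)"
      unfolding A sum_distrib_right by (intro sum.cong refl) (simp add: mult_ac)
    also have "\<dots> = (\<Sum>lam\<in>partitions_of k. \<Sum>e\<le>?D. of_rat (A e lam) * of_rat (poly (Lb ?D e) (of_nat d)) * chern_part r x lam)"
      by (rule sum.swap)
    also have "\<dots> = (\<Sum>lam\<in>partitions_of k. poly (map_poly of_rat (p lam)) (real d) * chern_part r x lam)"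
      unfolding polyp sum_distrib_right ..
    finally show ?thesis .
  qed
  thus ?thesis using degp by blast
qed




lemma card_split: "card (sym_exps (Suc r) d) = (\<Sum>j\<le>d. card (sym_exps r (d - j)))"
proof -
  have "real (card (sym_exps (Suc r) d)) = real (\<Sum>j\<le>d. card (sym_exps r (d - j)))"
    using split_last[where r=r and d=d and h="\<lambda>_. (1::real)" and x="\<lambda>_. 0"] by simp
  thus ?thesis by (simp only: of_nat_eq_iff)
qed

lemma card1: "card (sym_exps 1 d) = 1"
proof -
  have "card (sym_exps (Suc 0) d) = (\<Sum>j\<le>d. if j = d then 1 else 0)"
    unfolding card_split by (intro sum.cong refl) (auto simp: sym_exps_zero)
  thus ?thesis by simp
qed

lemma pow_step: "(real d + 1) ^ r \<le> real d ^ r + real r * (real d + 1) ^ (r - 1)"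
proof (cases r)
  case 0
  then show ?thesis by simp
next
  case (Suc s)
  have "(real d + 1) ^ Suc s - real d ^ Suc s = ((real d + 1) - real d) * (\<Sum>i<Suc s. real d ^ (Suc s - Suc i) * (real d + 1) ^ i)"
    by (rule power_diff_sumr2)
  also have "\<dots> = (\<Sum>i<Suc s. real d ^ (s - i) * (real d + 1) ^ i)" by simp
  also have "\<dots> \<le> (\<Sum>i<Suc s. (real d + 1) ^ (s - i) * (real d + 1) ^ i)"
    by (intro sum_mono mult_right_mono power_mono) auto
  also have "\<dots> = (\<Sum>i<Suc s. (real d + 1) ^ s)"
    by (intro sum.cong refl) (simp add: power_add[symmetric])
  also have "\<dots> = real (Suc s) * (real d + 1) ^ s" by simp
  finally show ?thesis using Suc by simp
qed

lemma powsum_lb: "1 \<le> r \<Longrightarrow> real d ^ r \<le> real r * (\<Sum>j\<le>d. real j ^ (r - 1))"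
proof (induction d)
  case 0
  then show ?case by (cases r) auto
next
  case (Suc d)
  have "real (Suc d) ^ r = (real d + 1) ^ r" by (simp add: add.commute)
  also have "\<dots> \<le> real d ^ r + real r * (real d + 1) ^ (r - 1)" by (rule pow_step)
  also have "\<dots> \<le> real r * (\<Sum>j\<le>d. real j ^ (r - 1)) + real r * (real d + 1) ^ (r - 1)"
    using Suc by simp
  also have "\<dots> = real r * (\<Sum>j\<le>Suc d. real j ^ (r - 1))" by (simp add: distrib_left add.commute)
  finally show ?case .
qed

lemma card_lb: "1 \<le> r \<Longrightarrow> real d ^ (r - 1) / fact (r - 1) \<le> real (card (sym_exps r d))"
proof (induction r arbitrary: d)
  case 0
  then show ?case by simp
next
  case (Suc r)
  show ?case
  proof (cases "r = 0")
    case True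
    then show ?thesis using card1 by simp
  next
    case False
    have "real d ^ r / fact r \<le> (real r * (\<Sum>j\<le>d. real j ^ (r - 1))) / fact r"
      by (intro divide_right_mono powsum_lb) (use False in auto)
    also have "\<dots> = (\<Sum>j\<le>d. real j ^ (r - 1) / fact (r - 1))"
    proof -
      have "fact r = real r * fact (r - 1)" using False by (metis fact_nonzero fact_num_eq_if of_nat_eq_0_iff)
      thus ?thesis using False by (simp add: sum_divide_distrib)
    qed
    also have "\<dots> \<le> (\<Sum>j\<le>d. real (card (sym_exps r j)))"
      by (intro sum_mono Suc.IH) (use False in auto)
    also have "\<dots> = (\<Sum>j\<le>d. real (card (sym_exps r (d - j))))"
    proof -
      have "(\<Sum>j<Suc d. real (card (sym_exps r (Suc d - Suc j)))) = (\<Sum>j<Suc d. real (card (sym_exps r j)))"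
        by (rule sum.nat_diff_reindex)
      thus ?thesis by (simp add: lessThan_Suc_atMost)
    qed
    also have "\<dots> = real (card (sym_exps (Suc r) d))" by (simp add: card_split)
    finally show ?thesis by simp
  qed
qed

lemma PP_x0: "PP r (\<lambda>_. 1) m d = real (card (sym_exps r d)) * real d ^ m"
proof -
  have "sym_root r (\<lambda>_. 1) a = real d" if "a \<in> sym_exps r d" for a
    using that by (simp add: sym_root_def sym_exps_def flip: of_nat_sum)
  thus ?thesis unfolding PP_def by simp
qed

lemma sign_aux: "i \<le> k \<Longrightarrow> (-1::real) ^ k * (-1) ^ (k - i) = (-1) ^ i"
proof -
  assume "i \<le> k"
  hence "(-1::real) ^ k = (-1) ^ i * (-1) ^ (k - i)" by (simp flip: power_add)
  hence "(-1::real) ^ k * (-1) ^ (k - i) = (-1) ^ i * ((-1) ^ (k - i) * (-1) ^ (k - i))" by simp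
  also have "(-1::real) ^ (k - i) * (-1) ^ (k - i) = 1" by (simp flip: power_add)
  finally show ?thesis by simp
qed

lemma seq_lb:
  fixes s :: "nat \<Rightarrow> real"
  assumes s0: "s 0 = 1"
    and rec: "\<And>k. s (Suc k) = (-1 / real (Suc k)) * (\<Sum>i=0..k. (-1)^(k - i) * (s i * (c * y ^ Suc (k - i))))"
    and c: "c \<ge> 0" and y: "y \<ge> 0"
  shows "(c * y) ^ k / fact k \<le> (-1) ^ k * s k"
proof (induction k rule: less_induct)
  case (less k)
  show ?case
  proof (cases k)
    case 0
    then show ?thesis using s0 by simp
  next
    case (Suc k')
    have nn: "0 \<le> (-1) ^ i * s i" if "i \<le> k'" for i
    proof -
      have "0 \<le> (c * y) ^ i / fact i" using c y by simp
      also have "\<dots> \<le> (-1) ^ i * s i" using less.IH[of i] that Suc by simp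
      finally show ?thesis .
    qed
    have "(-1) ^ Suc k' * s (Suc k') = (1 / real (Suc k')) * (\<Sum>i=0..k'. ((-1) ^ i * s i) * (c * y ^ Suc (k' - i)))"
    proof -
      have "(-1) ^ Suc k' * s (Suc k') = (1 / real (Suc k')) * (\<Sum>i=0..k'. ((-1) ^ k' * (-1) ^ (k' - i)) * (s i * (c * y ^ Suc (k' - i))))"
        unfolding rec by (simp add: sum_distrib_left mult_ac)
      also have "\<dots> = (1 / real (Suc k')) * (\<Sum>i=0..k'. ((-1) ^ i * s i) * (c * y ^ Suc (k' - i)))"
        by (intro arg_cong[where f = "\<lambda>z. (1 / real (Suc k')) * z"] sum.cong refl) (simp add: sign_aux mult_ac)
      finally show ?thesis .
    qed
    also have "\<dots> \<ge> (1 / real (Suc k')) * (((-1) ^ k' * s k') * (c * y ^ Suc (k' - k')))"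
    proof (intro mult_left_mono)
      show "(-1) ^ k' * s k' * (c * y ^ Suc (k' - k')) \<le> (\<Sum>i = 0..k'. (-1) ^ i * s i * (c * y ^ Suc (k' - i)))"
        by (rule member_le_sum[where f = "\<lambda>i. (-1) ^ i * s i * (c * y ^ Suc (k' - i))"])
           (auto intro!: mult_nonneg_nonneg nn c y zero_le_power)
    qed simp
    finally have "(1 / real (Suc k')) * (((-1) ^ k' * s k') * (c * y)) \<le> (-1) ^ Suc k' * s (Suc k')" by simp
    moreover have "(c * y) ^ Suc k' / fact (Suc k') \<le> (1 / real (Suc k')) * (((-1) ^ k' * s k') * (c * y))"
    proof -
      have "(c * y) ^ Suc k' / fact (Suc k') = (1 / real (Suc k')) * (((c * y) ^ k' / fact k') * (c * y))"
        by (simp add: field_simps del: of_nat_Suc)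
      also have "\<dots> \<le> (1 / real (Suc k')) * (((-1) ^ k' * s k') * (c * y))"
        using less.IH[of k'] Suc c y by (intro mult_left_mono mult_right_mono) auto
      finally show ?thesis .
    qed
    ultimately show ?thesis using Suc by simp
  qed
qed

lemma segre_lb:
  assumes r: "1 \<le> r"
  shows "real d ^ (r * k) / (fact (r - 1) ^ k * fact k) \<le> \<bar>segre_sym r (\<lambda>_. 1) d k\<bar>"
proof -
  let ?N = "real (card (sym_exps r d))"
  let ?s = "\<lambda>k. segre_sym r (\<lambda>_. 1) d k"
  have rec: "?s (Suc k) = (-1 / real (Suc k)) * (\<Sum>i=0..k. (-1)^(k - i) * (?s i * (?N * real d ^ Suc (k - i))))" for k
  proof -
    have "(of_rat (- 1 / of_nat (Suc k)) :: real) = -1 / real (Suc k)"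
      by (simp only: of_rat_divide of_rat_minus of_rat_1 of_rat_of_nat_eq)
    thus ?thesis by (simp only: segre_rec PP_x0)
  qed
  have lb: "(?N * real d) ^ k / fact k \<le> (-1) ^ k * ?s k"
    by (rule seq_lb[OF segre_0 rec]) auto
  have cl: "real d ^ (r - 1) / fact (r - 1) \<le> ?N" by (rule card_lb[OF r])
  have "real d ^ (r * k) / (fact (r - 1) ^ k * fact k) = (real d ^ (r - 1) / fact (r - 1) * real d) ^ k / fact k"
  proof -
    obtain r' where r': "r = Suc r'" using r by (cases r) auto
    have "real d ^ (r * k) = (real d ^ (r - 1) * real d) ^ k"
      unfolding r' by (simp add: power_mult[symmetric] power_Suc2[symmetric] del: power_Suc)
    thus ?thesis by (simp add: power_divide power_mult_distrib)
  qed
  also have "\<dots> \<le> (?N * real d) ^ k / fact k"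
    by (intro divide_right_mono power_mono mult_right_mono cl) auto
  also have "\<dots> \<le> (-1) ^ k * ?s k" by (rule lb)
  also have "\<dots> \<le> \<bar>?s k\<bar>" using abs_ge_self[of "(-1) ^ k * ?s k"] by (simp add: abs_mult)
  finally show ?thesis .
qed

lemma poly_upper:
  fixes Q :: "real poly"
  assumes "degree Q \<le> D" "1 \<le> y"
  shows "\<bar>poly Q y\<bar> \<le> (\<Sum>i\<le>D. \<bar>coeff Q i\<bar>) * y ^ D"
proof -
  have "\<bar>poly Q y\<bar> = \<bar>\<Sum>i\<le>D. coeff Q i * y ^ i\<bar>" using poly_sum_D[OF assms(1)] by simp
  also have "\<dots> \<le> (\<Sum>i\<le>D. \<bar>coeff Q i * y ^ i\<bar>)" by (rule sum_abs)
  also have "\<dots> \<le> (\<Sum>i\<le>D. \<bar>coeff Q i\<bar> * y ^ D)"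
  proof (intro sum_mono)
    fix i assume "i \<in> {..D}"
    hence "y ^ i \<le> y ^ D" using assms(2) by (intro power_increasing) auto
    thus "\<bar>coeff Q i * y ^ i\<bar> \<le> \<bar>coeff Q i\<bar> * y ^ D" using assms(2)
      by (simp add: abs_mult mult_left_mono)
  qed
  also have "\<dots> = (\<Sum>i\<le>D. \<bar>coeff Q i\<bar>) * y ^ D" by (simp add: sum_distrib_right)
  finally show ?thesis .
qed




theorem lemma3p2:
  fixes r k :: nat
  assumes "1 \<le> r"
  shows "\<exists>p :: nat multiset \<Rightarrow> rat poly.
           (\<forall>lam\<in>partitions_of k. degree (p lam) \<le> r * k)
         \<and> (\<exists>lam\<in>partitions_of k. (\<forall>i\<in>#lam. i \<le> r) \<and> degree (p lam) = r * k)
         \<and> (\<forall>(x :: nat \<Rightarrow> real) (d :: nat).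
              segre_sym r x d k =
              (\<Sum>lam\<in>partitions_of k. poly (map_poly of_rat (p lam)) (real d) * chern_part r x lam))"
proof -
  obtain p :: "nat multiset \<Rightarrow> rat poly" where deg: "\<forall>lam\<in>partitions_of k. degree (p lam) \<le> r * k"
    and ident: "\<forall>(x :: nat \<Rightarrow> real) (d :: nat). segre_sym r x d k =
              (\<Sum>lam\<in>partitions_of k. poly (map_poly of_rat (p lam)) (real d) * chern_part r x lam)"
    using main_exists[OF assms, of k] by blast
  have ex: "\<exists>lam\<in>partitions_of k. (\<forall>i\<in>#lam. i \<le> r) \<and> degree (p lam) = r * k"
  proof (cases "k = 0")
    case True
    thus ?thesis using deg by (simp add: partitions_of_0)
  next
    case False
    show ?thesis
    proof (rule ccontr)
      assume neg: "\<not> ?thesis"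
      have small: "degree (p lam) < r * k" if "lam \<in> partitions_of k" "\<forall>i\<in>#lam. i \<le> r" for lam
        using neg deg that by (metis le_neq_implies_less)
      define x0 :: "nat \<Rightarrow> real" where "x0 = (\<lambda>_. 1)"
      define D where "D = r * k - 1"
      have rkD: "r * k = Suc D" unfolding D_def using False assms by (simp add: Suc_le_eq)
      define Q where "Q = (\<Sum>lam\<in>partitions_of k. smult (chern_part r x0 lam) (map_poly of_rat (p lam)))"
      have degQ: "degree Q \<le> D" unfolding Q_def
      proof (intro degree_sum_le finite_partitions)
        fix lam assume lam: "lam \<in> partitions_of k"
        show "degree (smult (chern_part r x0 lam) (map_poly of_rat (p lam))) \<le> D"
        proof (cases "\<forall>i\<in>#lam. i \<le> r")
          case True
          have "degree (smult (chern_part r x0 lam) (map_poly of_rat (p lam))) \<le> degree (p lam)"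
            using degree_smult_le deg_of_rat by metis
          thus ?thesis using small[OF lam True] rkD by simp
        next
          case False
          then obtain i where i: "i \<in># lam" "r < i" by (auto simp: not_le)
          have "chern_part r x0 lam = 0" unfolding chern_part_def using i chern_big
            by (simp add: image_iff) (metis i(1) chern_big i(2))
          thus ?thesis by simp
        qed
      qed
      have polyQ: "poly Q (real d) = segre_sym r x0 d k" for d
        unfolding Q_def poly_sum poly_smult using ident by (simp add: mult.commute)
      define C where "C = (\<Sum>i\<le>D. \<bar>coeff Q i\<bar>)"
      define M :: real where "M = fact (r - 1) ^ k * fact k"
      have Mpos: "M > 0" unfolding M_def by simp
      have C0: "C \<ge> 0" unfolding C_def by (simp add: sum_nonneg)
      define d where "d = nat \<lceil>C * M\<rceil> + 1"
      have d1: "1 \<le> real d" unfolding d_def by simp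
      have dbig: "C * M < real d" unfolding d_def by linarith
      have "real d ^ (r * k) / M \<le> \<bar>segre_sym r x0 d k\<bar>"
        unfolding M_def x0_def by (rule segre_lb[OF assms])
      also have "\<dots> = \<bar>poly Q (real d)\<bar>" by (simp add: polyQ)
      also have "\<dots> \<le> C * real d ^ D" unfolding C_def by (rule poly_upper[OF degQ d1])
      finally have "real d * real d ^ D / M \<le> C * real d ^ D" using rkD by simp
      hence "real d * real d ^ D \<le> (C * M) * real d ^ D" using Mpos by (simp add: field_simps)
      moreover have "real d ^ D > 0" using d1 by simp
      ultimately have "real d \<le> C * M" by simp
      thus False using dbig by simp
    qed
  qed
  show ?thesis using deg ident ex by blast
qed


end
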